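(* For every rooted tree $T$ (rooted at $s$) which is a subgraph of the network graph and in which every vertex knows its parent and children, there is a CONGEST algorithm with $\widetilde{O}(D(T))$ rounds and $\widetilde{O}(1)$ congestion at the end of which every vertex $v$ of $T$ knows its heavy/light classification in $T$ and its compressed path $\pi^*(s,v,T)$.
   Context: CONGEST model: synchronous rounds, each vertex has a unique $O(\log n)$-bit ID and may send an $O(\log n)$-bit message to each neighbour per round; $\widetilde{O}$ hides polylog$(n)$ factors; congestion is the maximum total number of messages sent over an edge. $D(T)$ is the diameter of $T$. For a non-leaf vertex $v$ of the rooted tree $T$, its heavy child is the child $v'$ maximizing the number of vertices of the subtree $T_{v'}$ (ties broken arbitrarily but consistently); other children are light children. A vertex is heavy if it is a heavy child and light otherwise (the root is light). For a vertex $v$, let $L=[s=v_0,v_1,\dots,v_k]$ be the ordered list of light vertices on the root-to-$v$ tree path $\pi(s,v,T)$; the compressed path $\pi^*(s,v,T)$ consists of $L$ together with a table mapping each $v_i$ to the number of heavy vertices strictly between $v_i$ and $v_{i+1}$ on $\pi(s,v,T)$, where $v_{k+1}:=v$. *)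

theory Defs
  imports Complex_Main
begin

text \<open>Vertices of the network are identified with their IDs (natural numbers).  The local input of a vertex is
(own ID, n, set of neighbour IDs, whether it belongs to T, its parent in T, its children in T).\<close>

type_synonym msg = "bool list"
type_synonym linput = "nat \<times> nat \<times> nat set \<times> bool \<times> nat option \<times> nat set"
type_synonym state = "linput \<times> (nat \<Rightarrow> msg option) list"
type_synonym outp = "bool \<times> (nat \<times> nat) list"

text \<open>An algorithm: the message a vertex in a given state sends to the neighbour with a given ID
(None = no message), and its current output.  States record the local input and the full history
of received messages (w.l.o.g. for deterministic algorithms with unbounded local computation).\<close>

record alg =
  amsg :: "state \<Rightarrow> nat \<Rightarrow> msg option"
  aout :: "state \<Rightarrow> outp"

fun run :: "alg \<Rightarrow> (nat \<Rightarrow> linput) \<Rightarrow> (nat \<Rightarrow> nat \<Rightarrow> bool) \<Rightarrow> nat \<Rightarrow> nat \<Rightarrow> state" where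
  "run A I E 0 v = (I v, [])"
| "run A I E (Suc r) v =
     (I v, snd (run A I E r v) @ [\<lambda>u. if E u v then amsg A (run A I E r u) v else None])"

definition sent :: "alg \<Rightarrow> (nat \<Rightarrow> linput) \<Rightarrow> (nat \<Rightarrow> nat \<Rightarrow> bool) \<Rightarrow> nat \<Rightarrow> nat \<Rightarrow> nat \<Rightarrow> msg option" where
  "sent A I E t u v = (if E u v then amsg A (run A I E t u) v else None)"

definition edge_load :: "alg \<Rightarrow> (nat \<Rightarrow> linput) \<Rightarrow> (nat \<Rightarrow> nat \<Rightarrow> bool) \<Rightarrow> nat \<Rightarrow> nat \<Rightarrow> nat \<Rightarrow> nat" where
  "edge_load A I E r u v =
     card {t. t < r \<and> sent A I E t u v \<noteq> None} + card {t. t < r \<and> sent A I E t v u \<noteq> None}"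

definition lg :: "nat \<Rightarrow> nat" where
  "lg n = nat \<lceil>log 2 (real n + 2)\<rceil>"

definition up :: "(nat \<Rightarrow> nat option) \<Rightarrow> nat \<Rightarrow> nat \<Rightarrow> nat" where
  "up par k v = ((\<lambda>x. the (par x)) ^^ k) v"

definition rooted_tree_in ::
  "nat set \<Rightarrow> (nat \<Rightarrow> nat \<Rightarrow> bool) \<Rightarrow> nat set \<Rightarrow> nat \<Rightarrow> (nat \<Rightarrow> nat option) \<Rightarrow> bool" where
  "rooted_tree_in V E VT s par \<longleftrightarrow>
     VT \<subseteq> V \<and> s \<in> VT \<and> par s = None \<and>
     (\<forall>v\<in>VT - {s}. \<exists>u\<in>VT. par v = Some u \<and> E u v) \<and>
     (\<forall>v\<in>VT. \<exists>k. up par k v = s)"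

definition depth :: "(nat \<Rightarrow> nat option) \<Rightarrow> nat \<Rightarrow> nat \<Rightarrow> nat" where
  "depth par s v = (LEAST k. up par k v = s)"

definition anc_eq :: "(nat \<Rightarrow> nat option) \<Rightarrow> nat \<Rightarrow> nat \<Rightarrow> nat \<Rightarrow> bool" where
  "anc_eq par s u w \<longleftrightarrow> (\<exists>k \<le> depth par s w. up par k w = u)"

definition children :: "nat set \<Rightarrow> (nat \<Rightarrow> nat option) \<Rightarrow> nat \<Rightarrow> nat set" where
  "children VT par v = {c \<in> VT. par c = Some v}"

definition subtree_size :: "nat set \<Rightarrow> (nat \<Rightarrow> nat option) \<Rightarrow> nat \<Rightarrow> nat \<Rightarrow> nat" where
  "subtree_size VT par s v = card {w \<in> VT. anc_eq par s v w}"

text \<open>Distance in T (via the lowest common ancestor) and diameter D(T).\<close>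
definition tdist :: "nat set \<Rightarrow> (nat \<Rightarrow> nat option) \<Rightarrow> nat \<Rightarrow> nat \<Rightarrow> nat \<Rightarrow> nat" where
  "tdist VT par s u v = Min {depth par s u + depth par s v - 2 * depth par s w | w.
                               w \<in> VT \<and> anc_eq par s w u \<and> anc_eq par s w v}"

definition tdiam :: "nat set \<Rightarrow> (nat \<Rightarrow> nat option) \<Rightarrow> nat \<Rightarrow> nat" where
  "tdiam VT par s = Max {tdist VT par s u v | u v. u \<in> VT \<and> v \<in> VT}"

definition heavy_choice :: "nat set \<Rightarrow> (nat \<Rightarrow> nat option) \<Rightarrow> nat \<Rightarrow> (nat \<Rightarrow> nat) \<Rightarrow> bool" where
  "heavy_choice VT par s hc \<longleftrightarrow>
     (\<forall>v\<in>VT. children VT par v \<noteq> {} \<longrightarrow>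
        hc v \<in> children VT par v \<and>
        (\<forall>c\<in>children VT par v. subtree_size VT par s c \<le> subtree_size VT par s (hc v)))"

definition is_heavy :: "(nat \<Rightarrow> nat option) \<Rightarrow> nat \<Rightarrow> (nat \<Rightarrow> nat) \<Rightarrow> nat \<Rightarrow> bool" where
  "is_heavy par s hc w \<longleftrightarrow> w \<noteq> s \<and> (\<exists>p. par w = Some p \<and> hc p = w)"

definition root_path :: "(nat \<Rightarrow> nat option) \<Rightarrow> nat \<Rightarrow> nat \<Rightarrow> nat list" where
  "root_path par s v = map (\<lambda>i. up par (depth par s v - i) v) [0..<Suc (depth par s v)]"

text \<open>Compressed path: the light vertices v_0 = s, ..., v_k on the path, each paired with the number
of heavy vertices strictly between v_i and v_(i+1), where v_(k+1) = v.\<close>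
definition compressed_path :: "(nat \<Rightarrow> nat option) \<Rightarrow> nat \<Rightarrow> (nat \<Rightarrow> nat) \<Rightarrow> nat \<Rightarrow> (nat \<times> nat) list" where
  "compressed_path par s hc v =
     (let P = root_path par s v;
          H = is_heavy par s hc;
          idx = filter (\<lambda>j. \<not> H (P ! j)) [0..<length P];
          nxt = (\<lambda>m. if Suc m < length idx then idx ! Suc m else depth par s v)
      in map (\<lambda>m. (P ! (idx ! m), length (filter (\<lambda>j. H (P ! j)) [Suc (idx ! m)..<nxt m])))
             [0..<length idx])"

definition local_input ::
  "nat \<Rightarrow> (nat \<Rightarrow> nat \<Rightarrow> bool) \<Rightarrow> nat set \<Rightarrow> (nat \<Rightarrow> nat option) \<Rightarrow> nat \<Rightarrow> linput" where
  "local_input n E VT par v =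
     (v, n, {u. E v u}, v \<in> VT, if v \<in> VT then par v else None, children VT par v)"

end

theory Submission
  imports Defs
begin

fun to_bits :: "nat \<Rightarrow> nat \<Rightarrow> bool list" where
  "to_bits 0 x = []"
| "to_bits (Suc w) x = odd x # to_bits w (x div 2)"

fun from_bits :: "bool list \<Rightarrow> nat" where
  "from_bits [] = 0"
| "from_bits (b # l) = (if b then 1 else 0) + 2 * from_bits l"

lemma length_to_bits[simp]: "length (to_bits w x) = w"
  by (induction w arbitrary: x) auto

lemma from_to_bits: "x < 2 ^ w \<Longrightarrow> from_bits (to_bits w x) = x"
proof (induction w arbitrary: x)
  case 0 then show ?case by simp
next
  case (Suc w)
  then have "x div 2 < 2 ^ w" by auto
  then show ?case using Suc.IH by auto
qed

lemma lg_ge1: "1 \<le> lg n"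
proof -
  have "log 2 (real n + 2) \<ge> log 2 2" by simp
  then have "log 2 (real n + 2) \<ge> 1" by simp
  then have "\<lceil>log 2 (real n + 2)\<rceil> \<ge> 1" by linarith
  then show ?thesis unfolding lg_def by linarith
qed

lemma lg_pow: "n + 2 \<le> 2 ^ lg n"
proof -
  have c: "real (lg n) \<ge> log 2 (real n + 2)" unfolding lg_def by linarith
  have "real n + 2 = 2 powr (log 2 (real n + 2))" by simp
  also have "\<dots> \<le> 2 powr (real (lg n))" using c by (intro powr_mono) auto
  also have "\<dots> = real (2 ^ lg n)" by (simp add: powr_realpow)
  finally show ?thesis by linarith
qed

lemma filter_interval: "filter (\<lambda>i. a \<le> i \<and> i < b) [0..<t] = [a..<min t b]"
proof (induction t)
  case 0 then show ?case by simp
next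
  case (Suc t)
  then show ?case by (cases "t < b") (auto simp: min_def)
qed

definition cpl :: "(nat \<Rightarrow> bool) \<Rightarrow> nat list \<Rightarrow> (nat \<times> nat) list" where
 "cpl H P = (let idx = filter (\<lambda>j. \<not> H (P ! j)) [0..<length P];
    nxt = (\<lambda>m. if Suc m < length idx then idx ! Suc m else length P - 1)
   in map (\<lambda>m. (P ! (idx ! m), length (filter (\<lambda>j. H (P ! j)) [Suc (idx ! m)..<nxt m]))) [0..<length idx])"

definition incr_last :: "(nat \<times> nat) list \<Rightarrow> (nat \<times> nat) list" where
  "incr_last L = butlast L @ [(fst (last L), Suc (snd (last L)))]"

definition step :: "(nat \<times> nat) list \<Rightarrow> bool \<Rightarrow> bool \<Rightarrow> nat \<Rightarrow> (nat \<times> nat) list" where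
  "step L hp hx x = (let L' = if hp then incr_last L else L in if hx then L' else L' @ [(x, 0)])"

lemma compressed_path_cpl:
  "compressed_path par s hc v = cpl (is_heavy par s hc) (root_path par s v)"
  unfolding compressed_path_def cpl_def root_path_def by (simp add: Let_def)

lemma cpl_snoc:
  assumes "P \<noteq> []" "\<not> H (P ! 0)"
  shows "cpl H (P @ [x]) = step (cpl H P) (H (last P)) (H x) x"
proof -
  define N where "N = length P"
  define P' where "P' = P @ [x]"
  define idx where "idx = filter (\<lambda>j. \<not> H (P ! j)) [0..<N]"
  define idx' where "idx' = filter (\<lambda>j. \<not> H (P' ! j)) [0..<length P']"
  define l where "l = length idx"
  define l' where "l' = length idx'"
  have N0: "N > 0" using assms(1) N_def by simp
  have lenP': "length P' = Suc N" using P'_def N_def by simp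
  have P'j: "j < N \<Longrightarrow> P' ! j = P ! j" for j using P'_def N_def by (simp add: nth_append)
  have P'N: "P' ! N = x" using P'_def N_def by simp
  have idx'_eq: "idx' = idx @ (if H x then [] else [N])"
  proof -
    have "idx' = filter (\<lambda>j. \<not> H (P' ! j)) [0..<N] @ filter (\<lambda>j. \<not> H (P' ! j)) [N]"
      unfolding idx'_def lenP' by simp
    also have "filter (\<lambda>j. \<not> H (P' ! j)) [0..<N] = idx"
      unfolding idx_def by (rule filter_cong) (auto simp: P'j)
    finally show ?thesis using P'N by simp
  qed
  have idx_lt: "j \<in> set idx \<Longrightarrow> j < N" for j unfolding idx_def by auto
  have "0 \<in> set idx" unfolding idx_def using N0 assms(2) by auto
  then have l0: "l > 0" unfolding l_def by (cases idx) auto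
  define i where "i = idx ! (l - 1)"
  have i_in: "i \<in> set idx" unfolding i_def l_def using l0 l_def by simp
  have iN: "i < N" using idx_lt i_in by simp
  have Hi: "\<not> H (P ! i)" using i_in unfolding idx_def by simp
  have lastP: "last P = P ! (N - 1)" using assms(1) N_def by (simp add: last_conv_nth)
  have i_last: "\<not> H (P ! (N - 1)) \<Longrightarrow> i = N - 1"
  proof -
    assume a: "\<not> H (P ! (N - 1))"
    have "[0..<N] = [0..<N-1] @ [N-1]" using N0
      by (metis Suc_diff_1 upt_Suc_append zero_le)
    then have "idx = filter (\<lambda>j. \<not> H (P ! j)) [0..<N-1] @ [N-1]" unfolding idx_def using a by simp
    then show ?thesis unfolding i_def l_def by (simp add: nth_append)
  qed
  have l'_eq: "l' = l + (if H x then 0 else 1)" unfolding l'_def l_def idx'_eq by simp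
  define g where "g = (\<lambda>m. (P ! (idx ! m), length (filter (\<lambda>j. H (P ! j))
       [Suc (idx ! m)..<(if Suc m < l then idx ! Suc m else N - 1)])))"
  define g' where "g' = (\<lambda>m. (P' ! (idx' ! m), length (filter (\<lambda>j. H (P' ! j))
       [Suc (idx' ! m)..<(if Suc m < l' then idx' ! Suc m else length P' - 1)])))"
  have cplP: "cpl H P = map g [0..<l]"
    unfolding cpl_def g_def l_def idx_def N_def by (simp add: Let_def)
  have cplP': "cpl H (P @ [x]) = map g' [0..<l']"
    unfolding cpl_def g'_def l'_def idx'_def P'_def by (simp add: Let_def)
  have upl: "[0..<l] = [0..<l-1] @ [l-1]" using l0
    by (metis Suc_diff_1 upt_Suc_append zero_le)
  have A: "map g' [0..<l-1] = map g [0..<l-1]"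
  proof (rule map_cong[OF refl])
    fix m assume "m \<in> set [0..<l-1]"
    then have m: "Suc m < l" by auto
    have e1: "idx' ! m = idx ! m" "idx' ! Suc m = idx ! Suc m"
      using m unfolding idx'_eq l_def by (auto simp: nth_append)
    have "Suc m < l'" using m l'_eq by simp
    have lt: "idx ! Suc m < N" using m idx_lt l_def by simp
    have "filter (\<lambda>j. H (P' ! j)) [Suc (idx ! m)..<idx ! Suc m]
        = filter (\<lambda>j. H (P ! j)) [Suc (idx ! m)..<idx ! Suc m]"
      by (rule filter_cong) (auto, (metis P'j lt order.strict_trans)+)
    moreover have "P' ! (idx ! m) = P ! (idx ! m)"
      using P'j idx_lt l_def m by simp
    ultimately show "g' m = g m" unfolding g'_def g_def using e1 m \<open>Suc m < l'\<close> by simp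
  qed
  define cnt where "cnt = length (filter (\<lambda>j. H (P ! j)) [Suc i..<N - 1])"
  have gl: "g (l - 1) = (P ! i, cnt)" unfolding g_def cnt_def i_def using l0 by simp
  have nxt': "(if Suc (l - 1) < l' then idx' ! Suc (l - 1) else length P' - 1) = N"
    using l0 l'_eq lenP' idx'_eq l_def by (auto simp: nth_append)
  have e2: "idx' ! (l - 1) = i" unfolding i_def idx'_eq using l0 l_def by (auto simp: nth_append)
  have B: "g' (l - 1) = (P ! i, cnt + (if H (last P) then 1 else 0))"
  proof (cases "H (P ! (N - 1))")
    case True
    then have iN1: "i < N - 1" using iN Hi by (cases "i = N - 1") auto
    have "[Suc i..<N] = [Suc i..<N-1] @ [N-1]" using iN1
      by (metis Suc_diff_1 Suc_leI N0 upt_Suc_append)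
    moreover have "filter (\<lambda>j. H (P' ! j)) [Suc i..<N-1] = filter (\<lambda>j. H (P ! j)) [Suc i..<N-1]"
      by (rule filter_cong) (auto simp: P'j)
    moreover have "P' ! (N - 1) = P ! (N - 1)" using P'j N0 by simp
    ultimately show ?thesis unfolding g'_def using nxt' e2 True lastP P'j iN cnt_def by simp
  next
    case False
    then have "i = N - 1" by (rule i_last)
    then show ?thesis unfolding g'_def using nxt' e2 False lastP P'j iN cnt_def N0 by simp
  qed
  have C: "\<not> H x \<Longrightarrow> g' l = (x, 0)"
  proof -
    assume "\<not> H x"
    then have "idx' ! l = N" "l' = Suc l" unfolding idx'_eq l_def using l'_eq l_def by (auto simp: nth_append)
    then show ?thesis unfolding g'_def using P'N lenP' by simp
  qed
  have cplP2: "cpl H P = map g [0..<l-1] @ [(P ! i, cnt)]" using cplP upl gl by simp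
  have up': "[0..<l'] = [0..<l-1] @ [l-1] @ (if H x then [] else [l])"
    using upl l'_eq by auto
  show ?thesis
    unfolding cplP' up' cplP2 step_def incr_last_def using A B C by (auto simp: Let_def)
qed

locale tset =
  fixes V :: "nat set" and E :: "nat \<Rightarrow> nat \<Rightarrow> bool" and VT :: "nat set" and s :: nat
    and par :: "nat \<Rightarrow> nat option"
  assumes rt: "rooted_tree_in V E VT s par" and finV: "finite V"
    and Esym: "\<forall>u v. E u v \<longrightarrow> u \<in> V \<and> v \<in> V \<and> u \<noteq> v \<and> E v u"
begin

abbreviation "dep v \<equiv> depth par s v"
abbreviation "upp k v \<equiv> up par k v"
abbreviation "sub v \<equiv> {w \<in> VT. anc_eq par s v w}"
abbreviation "sz v \<equiv> subtree_size VT par s v"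
abbreviation "ch v \<equiv> children VT par v"

lemma VT_sub: "VT \<subseteq> V" and s_in: "s \<in> VT" and par_s: "par s = None"
  using rt unfolding rooted_tree_in_def by auto

lemma finVT: "finite VT" using VT_sub finV finite_subset by blast

lemma par_ex: "v \<in> VT \<Longrightarrow> v \<noteq> s \<Longrightarrow> \<exists>p. par v = Some p \<and> p \<in> VT \<and> E p v"
  using rt unfolding rooted_tree_in_def by auto

lemma reach: "v \<in> VT \<Longrightarrow> \<exists>k. upp k v = s"
  using rt unfolding rooted_tree_in_def by auto

lemma up_0[simp]: "upp 0 v = v" unfolding up_def by simp

lemma up_Suc: "upp (Suc k) v = the (par (upp k v))" unfolding up_def by simp

lemma up_Suc_right: "upp (Suc k) v = upp k (the (par v))"
  unfolding up_def by (simp only: funpow_Suc_right comp_def)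

lemma depth_up: "v \<in> VT \<Longrightarrow> upp (dep v) v = s"
  unfolding depth_def using reach by (rule LeastI_ex)

lemma depth_min: "k < dep v \<Longrightarrow> upp k v \<noteq> s"
  unfolding depth_def using not_less_Least by blast

lemma depth_le: "upp k v = s \<Longrightarrow> dep v \<le> k"
  unfolding depth_def by (rule Least_le)

lemma depth_s[simp]: "dep s = 0"
  using depth_le[of 0 s] by simp

lemma depth0: "v \<in> VT \<Longrightarrow> dep v = 0 \<Longrightarrow> v = s"
  using depth_up by fastforce

lemma up_in: "v \<in> VT \<Longrightarrow> k \<le> dep v \<Longrightarrow> upp k v \<in> VT"
proof (induction k)
  case 0 then show ?case by simp
next
  case (Suc k)
  then have "upp k v \<in> VT" "upp k v \<noteq> s" using depth_min by auto
  then obtain p where "par (upp k v) = Some p" "p \<in> VT" using par_ex by blast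
  then show ?case by (simp add: up_Suc)
qed

lemma child_props: "c \<in> VT \<Longrightarrow> par c = Some v \<Longrightarrow> c \<noteq> s \<and> v \<in> VT \<and> E v c"
  using par_ex par_s by (cases "c = s") force+

lemma depth_child: assumes "c \<in> VT" "par c = Some v" shows "dep c = Suc (dep v)"
proof -
  have cs: "c \<noteq> s" and v: "v \<in> VT" using child_props assms by auto
  have "upp (Suc (dep v)) c = s" using up_Suc_right assms depth_up v by simp
  then have le: "dep c \<le> Suc (dep v)" by (rule depth_le)
  have "dep c \<noteq> 0" using depth_up[OF assms(1)] cs by (metis up_0)
  then obtain m where m: "dep c = Suc m" by (cases "dep c") auto
  then have "upp m v = s" using depth_up[OF assms(1)] up_Suc_right assms by simp
  then have "dep v \<le> m" by (rule depth_le)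
  then show ?thesis using le m by simp
qed

lemma depth_upk: "v \<in> VT \<Longrightarrow> k \<le> dep v \<Longrightarrow> dep (upp k v) = dep v - k"
proof (induction k)
  case 0 then show ?case by simp
next
  case (Suc k)
  then have "upp k v \<in> VT" "upp k v \<noteq> s" using depth_min up_in by auto
  then obtain p where p: "par (upp k v) = Some p" "p \<in> VT" using par_ex by blast
  then have "dep (upp k v) = Suc (dep p)" using depth_child \<open>upp k v \<in> VT\<close> by blast
  then show ?case using Suc p by (simp add: up_Suc)
qed

lemma children_ch: "c \<in> ch v \<longleftrightarrow> c \<in> VT \<and> par c = Some v"
  unfolding children_def by simp

lemma fin_ch: "finite (ch v)" using finVT unfolding children_def by simp

lemma not_par_child: "c \<in> ch v \<Longrightarrow> par v \<noteq> Some c"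
proof
  assume "c \<in> ch v" "par v = Some c"
  then have "c \<in> VT" "par c = Some v" by (auto simp: children_ch)
  then have v: "v \<in> VT" using child_props by blast
  have "dep c = Suc (dep v)" using depth_child \<open>c \<in> VT\<close> \<open>par c = Some v\<close> by blast
  moreover have "dep v = Suc (dep c)" using depth_child v \<open>par v = Some c\<close> by blast
  ultimately show False by simp
qed

lemma root_path_len: "length (root_path par s v) = Suc (dep v)"
  unfolding root_path_def by simp

lemma root_path_s: "root_path par s s = [s]"
  unfolding root_path_def by simp

lemma root_path_0: "v \<in> VT \<Longrightarrow> root_path par s v ! 0 = s"
  unfolding root_path_def using depth_up by (simp del: upt_Suc)

lemma root_path_last: "last (root_path par s v) = v"
  unfolding root_path_def by (simp add: last_map)

lemma root_path_child: assumes "c \<in> VT" "par c = Some v"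
  shows "root_path par s c = root_path par s v @ [c]"
proof -
  have d: "dep c = Suc (dep v)" using depth_child assms by blast
  have "root_path par s c = map (\<lambda>i. upp (dep c - i) c) [0..<Suc (dep v)] @ [upp 0 c]"
    unfolding root_path_def d by simp
  also have "map (\<lambda>i. upp (dep c - i) c) [0..<Suc (dep v)] = root_path par s v"
    unfolding root_path_def
  proof (rule map_cong[OF refl])
    fix i assume "i \<in> set [0..<Suc (dep v)]"
    then have "dep c - i = Suc (dep v - i)" using d by auto
    then show "upp (dep c - i) c = upp (dep v - i) v" using up_Suc_right assms by simp
  qed
  finally show ?thesis by simp
qed

lemma sub_self: "v \<in> VT \<Longrightarrow> v \<in> sub v"
  unfolding anc_eq_def by (auto intro: exI[of _ 0])

lemma sub_child: assumes "c \<in> ch v" shows "sub c \<subseteq> sub v"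
proof
  fix w assume "w \<in> sub c"
  then obtain k where w: "w \<in> VT" "k \<le> dep w" "upp k w = c" unfolding anc_eq_def by auto
  have c: "c \<in> VT" "par c = Some v" using assms by (auto simp: children_ch)
  have "dep c = dep w - k" using depth_upk w by metis
  moreover have "dep c = Suc (dep v)" using depth_child c by blast
  ultimately have "Suc k \<le> dep w" by simp
  moreover have "upp (Suc k) w = v" using w c by (simp add: up_Suc)
  ultimately show "w \<in> sub v" using w unfolding anc_eq_def by blast
qed

lemma v_notin_sub_child: assumes "c \<in> ch v" shows "v \<notin> sub c"
proof
  assume "v \<in> sub c"
  then obtain k where w: "v \<in> VT" "k \<le> dep v" "upp k v = c" unfolding anc_eq_def by auto
  have c: "c \<in> VT" "par c = Some v" using assms by (auto simp: children_ch)
  have "dep c = dep v - k" using depth_upk w by metis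
  moreover have "dep c = Suc (dep v)" using depth_child c by blast
  ultimately show False by simp
qed

lemma sub_split: assumes "w \<in> sub v" "w \<noteq> v" shows "\<exists>c\<in>ch v. w \<in> sub c"
proof -
  obtain k where w: "w \<in> VT" "k \<le> dep w" "upp k w = v" using assms unfolding anc_eq_def by auto
  have "k \<noteq> 0" by (metis up_0 w(3) assms(2))
  then obtain j where j: "k = Suc j" by (cases k) auto
  define c where "c = upp j w"
  have cV: "c \<in> VT" using up_in w j c_def by simp
  have "c \<noteq> s" using depth_min w j c_def by simp
  then obtain p where p: "par c = Some p" using par_ex cV by blast
  have "p = v" using w j p c_def by (simp add: up_Suc)
  then have "c \<in> ch v" using cV p by (simp add: children_ch)
  moreover have "j \<le> dep w" using w j by simp
  then have "w \<in> sub c" using w unfolding anc_eq_def c_def by blast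
  ultimately show ?thesis by blast
qed

lemma sub_disj: assumes "c \<in> ch v" "c' \<in> ch v" "w \<in> sub c" "w \<in> sub c'" shows "c = c'"
proof -
  obtain i where i: "w \<in> VT" "i \<le> dep w" "upp i w = c" using assms unfolding anc_eq_def by auto
  obtain j where j: "j \<le> dep w" "upp j w = c'" using assms unfolding anc_eq_def by auto
  have "dep c = dep w - i" "dep c' = dep w - j" using depth_upk i j by metis+
  moreover have "dep c = Suc (dep v)" "dep c' = Suc (dep v)"
    using depth_child assms(1,2) by (auto simp: children_ch)
  ultimately have "i = j" using i j by simp
  then show ?thesis using i j by simp
qed

lemma sub_eq: assumes "v \<in> VT" shows "sub v = insert v (\<Union>c\<in>ch v. sub c)"
proof (rule set_eqI, rule iffI)
  fix w assume "w \<in> sub v"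
  then show "w \<in> insert v (\<Union>c\<in>ch v. sub c)" using sub_split[of w v] by (cases "w = v") auto
next
  fix w assume "w \<in> insert v (\<Union>c\<in>ch v. sub c)"
  then show "w \<in> sub v" using sub_self[OF assms] sub_child[of _ v] by auto
qed

lemma size_rec: assumes "v \<in> VT" shows "sz v = Suc (\<Sum>c\<in>ch v. sz c)"
proof -
  have fin: "finite (sub c)" for c using finVT by simp
  have "sz v = card (insert v (\<Union>c\<in>ch v. sub c))"
    unfolding subtree_size_def using sub_eq[OF assms] by simp
  also have "\<dots> = Suc (card (\<Union>c\<in>ch v. sub c))"
    using v_notin_sub_child fin fin_ch by (subst card_insert_disjoint) auto
  also have "card (\<Union>c\<in>ch v. sub c) = (\<Sum>c\<in>ch v. card (sub c))"
    using fin fin_ch sub_disj by (intro card_UN_disjoint) auto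
  finally show ?thesis unfolding subtree_size_def by simp
qed

lemma sz_s: "sz s = card VT"
proof -
  have "anc_eq par s s w" if "w \<in> VT" for w unfolding anc_eq_def using depth_up[OF that] by blast
  then have "sub s = VT" by blast
  then show ?thesis unfolding subtree_size_def by simp
qed

lemma sz_pos: "v \<in> VT \<Longrightarrow> 1 \<le> sz v"
proof -
  assume v: "v \<in> VT"
  have "finite (sub v)" using finVT by simp
  moreover have "sub v \<noteq> {}" using sub_self[OF v] by blast
  ultimately show ?thesis unfolding subtree_size_def by (simp add: Suc_leI card_gt_0_iff)
qed

lemma sz_le: "sz v \<le> card VT"
  unfolding subtree_size_def by (rule card_mono[OF finVT]) blast

lemma depth_le_D: assumes "v \<in> VT" shows "dep v \<le> tdiam VT par s"
proof -
  have a: "anc_eq par s w s \<longleftrightarrow> w = s" for w unfolding anc_eq_def by auto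
  have b: "anc_eq par s s v" unfolding anc_eq_def using depth_up assms by auto
  have e: "{w. w \<in> VT \<and> anc_eq par s w s \<and> anc_eq par s w v} = {s}" using a b s_in by blast
  have "{dep s + dep v - 2 * dep w |w. w \<in> VT \<and> anc_eq par s w s \<and> anc_eq par s w v}
     = (\<lambda>w. dep s + dep v - 2 * dep w) ` {w. w \<in> VT \<and> anc_eq par s w s \<and> anc_eq par s w v}"
    by blast
  then have "{dep s + dep v - 2 * dep w |w. w \<in> VT \<and> anc_eq par s w s \<and> anc_eq par s w v} = {dep v}"
    unfolding e by simp
  then have td: "tdist VT par s s v = dep v" unfolding tdist_def by simp
  define X where "X = {tdist VT par s u v | u v. u \<in> VT \<and> v \<in> VT}"
  have "X = (\<lambda>(u,v). tdist VT par s u v) ` (VT \<times> VT)"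
    unfolding X_def by auto
  then have fin: "finite X" using finVT by simp
  have mem: "tdist VT par s s v \<in> X" unfolding X_def using s_in assms by blast
  have "tdist VT par s s v \<le> Max X" by (rule Max_ge[OF fin mem])
  then show ?thesis using td unfolding tdiam_def X_def by simp
qed

end

type_synonym hist = "(nat \<Rightarrow> msg option) list"

definition arrived :: "hist \<Rightarrow> nat \<Rightarrow> bool" where
  "arrived h c = (\<exists>i<length h. (h ! i) c \<noteq> None)"
definition arrt :: "hist \<Rightarrow> nat \<Rightarrow> nat" where
  "arrt h c = (LEAST i. i < length h \<and> (h ! i) c \<noteq> None)"
definition alldone :: "nat set \<Rightarrow> hist \<Rightarrow> bool" where
  "alldone C h = (\<forall>c\<in>C. arrived h c)"
definition hloc :: "nat set \<Rightarrow> hist \<Rightarrow> nat" where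
  "hloc C h = (if C = {} then 0 else Suc (Max (arrt h ` C)))"
definition szof :: "hist \<Rightarrow> nat \<Rightarrow> nat" where
  "szof h c = from_bits (the ((h ! arrt h c) c))"
definition hcof :: "nat set \<Rightarrow> (nat \<Rightarrow> nat) \<Rightarrow> nat" where
  "hcof C f = (LEAST c. c \<in> C \<and> (\<forall>c'\<in>C. f c' \<le> f c))"
definition pmsgs :: "hist \<Rightarrow> nat \<Rightarrow> msg list" where
  "pmsgs h p = map (\<lambda>f. the (f p)) (filter (\<lambda>f. f p \<noteq> None) h)"
definition dec_entry :: "nat \<Rightarrow> msg \<Rightarrow> nat \<times> nat" where
  "dec_entry W m = (from_bits (take W (drop 2 m)), from_bits (drop (2 + W) m))"
definition enc_entry :: "nat \<Rightarrow> nat \<Rightarrow> bool \<Rightarrow> bool \<Rightarrow> nat \<times> nat \<Rightarrow> msg" where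
  "enc_entry W1 W2 lf hf e = lf # hf # to_bits W1 (fst e) @ to_bits W2 (snd e)"

definition compl_f :: "nat option \<Rightarrow> nat set \<Rightarrow> hist \<Rightarrow> bool" where
  "compl_f pr C h = (case pr of None \<Rightarrow> alldone C h | Some p \<Rightarrow> (\<exists>m\<in>set (pmsgs h p). hd m))"
definition start_f :: "nat option \<Rightarrow> nat set \<Rightarrow> hist \<Rightarrow> nat" where
  "start_f pr C h = (case pr of None \<Rightarrow> hloc C h
     | Some p \<Rightarrow> Suc (LEAST i. i < length h \<and> (h ! i) p \<noteq> None \<and> hd (the ((h ! i) p))))"
definition mypath_f :: "nat \<Rightarrow> nat \<Rightarrow> nat option \<Rightarrow> hist \<Rightarrow> (nat \<times> nat) list" where
  "mypath_f W me pr h = (case pr of None \<Rightarrow> [(me, 0)] | Some p \<Rightarrow> map (dec_entry W) (pmsgs h p))"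
definition myheavy_f :: "nat option \<Rightarrow> hist \<Rightarrow> bool" where
  "myheavy_f pr h = (case pr of None \<Rightarrow> False | Some p \<Rightarrow> hd (tl (hd (pmsgs h p))))"

definition amsg_f :: "nat \<Rightarrow> state \<Rightarrow> nat \<Rightarrow> msg option" where
  "amsg_f b st w = (case st of ((me, n, nb, inT, pr, C), h) \<Rightarrow>
    (let L = lg n; W = b * L; t = length h in
     if \<not> inT then None
     else if pr = Some w then
       (if alldone C h \<and> hloc C h = t then Some (to_bits L (Suc (\<Sum>c\<in>C. szof h c))) else None)
     else if w \<in> C then
       (let S = start_f pr C h; hcl = hcof C (szof h);
            pc = step (mypath_f W me pr h) (myheavy_f pr h) (w = hcl) w; j = t - S in
        if compl_f pr C h \<and> alldone C h \<and> S \<le> t \<and> j < length pc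
        then Some (enc_entry W L (Suc j = length pc) (w = hcl) (pc ! j)) else None)
     else None))"

definition aout_f :: "nat \<Rightarrow> state \<Rightarrow> outp" where
  "aout_f b st = (case st of ((me, n, nb, inT, pr, C), h) \<Rightarrow>
     (myheavy_f pr h, mypath_f (b * lg n) me pr h))"

definition alg_of :: "nat \<Rightarrow> alg" where
  "alg_of b = \<lparr> amsg = amsg_f b, aout = aout_f b \<rparr>"

lemma run_eq: "run A I E t v = (I v, map (\<lambda>i u. sent A I E i u v) [0..<t])"
  by (induction t) (auto simp: sent_def)

lemma dec_enc: "fst e < 2 ^ W \<Longrightarrow> snd e < 2 ^ L \<Longrightarrow> dec_entry W (enc_entry W L lf hf e) = e"
  unfolding dec_entry_def enc_entry_def by (cases e) (simp add: from_to_bits)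

lemma len_enc: "length (enc_entry W L lf hf e) = 2 + W + L"
  unfolding enc_entry_def by simp

lemma hcof_prop: assumes "finite C" "C \<noteq> {}"
  shows "hcof C f \<in> C \<and> (\<forall>c'\<in>C. f c' \<le> f (hcof C f))"
proof -
  have "Max (f ` C) \<in> f ` C" using assms by simp
  then obtain m where m: "m \<in> C" "f m = Max (f ` C)" by (metis imageE)
  have "m \<in> C \<and> (\<forall>c'\<in>C. f c' \<le> f m)" using m assms by auto
  then show ?thesis unfolding hcof_def by (rule LeastI)
qed

lemma hcof_cong: "(\<And>c. c \<in> C \<Longrightarrow> f c = g c) \<Longrightarrow> hcof C f = hcof C g"
  unfolding hcof_def by (metis (no_types, lifting))

lemma step_len: "L \<noteq> [] \<Longrightarrow> length (step L hp hx x) = length L + (if hx then 0 else 1)"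
  unfolding step_def incr_last_def by (auto simp: Let_def)

lemma step_ne: "L \<noteq> [] \<Longrightarrow> step L hp hx x \<noteq> []"
  unfolding step_def incr_last_def by (auto simp: Let_def)

lemma step_entries: assumes "L \<noteq> []" "e \<in> set (step L hp hx x)"
  shows "e = (x, 0) \<or> (\<exists>e'\<in>set L. fst e = fst e' \<and> snd e \<le> Suc (snd e'))"
proof -
  have "e \<in> set (if hp then incr_last L else L) \<or> e = (x, 0)"
    using assms(2) unfolding step_def by (auto simp: Let_def split: if_splits)
  moreover have "e \<in> set (incr_last L) \<Longrightarrow> \<exists>e'\<in>set L. fst e = fst e' \<and> snd e \<le> Suc (snd e')"
    unfolding incr_last_def using assms(1)
    by (auto dest: in_set_butlastD intro: bexI[of _ "last L"])
  ultimately show ?thesis by (auto split: if_splits)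
qed

locale tset2 = tset +
  fixes b n :: nat
  assumes cardV: "card V = n" and ids: "\<forall>v\<in>V. v < n ^ b"
begin

abbreviation "L \<equiv> lg n"
abbreviation "W \<equiv> b * lg n"
abbreviation "I \<equiv> local_input n E VT par"
abbreviation "A \<equiv> alg_of b"
abbreviation "snt t u v \<equiv> sent A I E t u v"
abbreviation "hist v t \<equiv> map (\<lambda>i u. sent A I E i u v) [0..<t]"
definition "hc v = hcof (ch v) sz"
abbreviation "cp v \<equiv> compressed_path par s hc v"
abbreviation "D \<equiv> tdiam VT par s"

lemma amsg_alg[simp]: "amsg (alg_of b) = amsg_f b" "aout (alg_of b) = aout_f b"
  by (simp_all add: alg_of_def)

lemma snt_eq: "snt t u v = (if E u v then amsg_f b (I u, hist u t) v else None)"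
proof -
  have "snt t u v = (if E u v then amsg A (run A I E t u) v else None)" by (rule sent_def)
  also have "run A I E t u = (I u, hist u t)" by (rule run_eq)
  finally show ?thesis by simp
qed

lemma amsg_notVT: "u \<notin> VT \<Longrightarrow> amsg_f b (I u, h) w = None"
  by (simp add: amsg_f_def local_input_def)

lemma amsg_VT: "u \<in> VT \<Longrightarrow> amsg_f b (I u, h) w =
  (if par u = Some w then
     (if alldone (ch u) h \<and> hloc (ch u) h = length h then Some (to_bits L (Suc (\<Sum>c\<in>ch u. szof h c))) else None)
   else if w \<in> ch u then
     (let S = start_f (par u) (ch u) h; hcl = hcof (ch u) (szof h);
          pc = step (mypath_f W u (par u) h) (myheavy_f (par u) h) (w = hcl) w; j = length h - S in
      if compl_f (par u) (ch u) h \<and> alldone (ch u) h \<and> S \<le> length h \<and> j < length pc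
      then Some (enc_entry W L (Suc j = length pc) (w = hcl) (pc ! j)) else None)
   else None)"
  by (simp add: amsg_f_def local_input_def Let_def)

lemma n_pos: "1 \<le> n"
proof -
  have "V \<noteq> {}" using s_in VT_sub by blast
  then have "card V > 0" using finV by (simp add: card_gt_0_iff)
  then show ?thesis using cardV by simp
qed

lemma cardVT_le: "card VT \<le> n"
  using cardV card_mono[OF finV VT_sub] by simp

lemma nL: "n + 2 \<le> 2 ^ L" by (rule lg_pow)

lemma idW: assumes "v \<in> VT" shows "v < 2 ^ W"
proof -
  have "v < n ^ b" using ids assms VT_sub by blast
  also have "n ^ b \<le> (2 ^ L) ^ b" using nL by (intro power_mono) auto
  also have "((2::nat) ^ L) ^ b = 2 ^ W" by (metis power_mult mult.commute)
  finally show ?thesis .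
qed

lemma arrived_hist: "arrived (hist v t) c \<longleftrightarrow> (\<exists>i<t. snt i c v \<noteq> None)"
  unfolding arrived_def by auto

lemma arrt_hist: assumes "\<And>i. snt i c v = (if i = g then Some m else None)" "g < t"
  shows "arrt (hist v t) c = g"
  unfolding arrt_def using assms by (intro Least_equality) (auto split: if_splits)

lemma szof_hist: assumes "\<And>i. snt i c v = (if i = g then Some m else None)" "g < t"
  shows "szof (hist v t) c = from_bits m"
  unfolding szof_def arrt_hist[OF assms] using assms by simp

lemma pmsgs_hist: "pmsgs (hist v t) p = map (\<lambda>i. the (snt i p v)) (filter (\<lambda>i. snt i p v \<noteq> None) [0..<t])"
  unfolding pmsgs_def by (simp add: filter_map o_def)

definition Q :: "nat \<Rightarrow> nat \<Rightarrow> bool" where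
  "Q v hv \<longleftrightarrow> hv + dep v \<le> D \<and> (\<forall>t. alldone (ch v) (hist v t) \<longleftrightarrow> hv \<le> t) \<and>
     (\<forall>t\<ge>hv. hloc (ch v) (hist v t) = hv \<and> (\<forall>c\<in>ch v. szof (hist v t) c = sz c))"

lemma sz_lt: "sz v < 2 ^ L"
  using sz_le[of v] cardVT_le nL by linarith

lemma sent_up: assumes "v \<in> VT" "par v = Some p" "Q v hv"
  shows "snt t v p = (if t = hv then Some (to_bits L (sz v)) else None)"
proof -
  have "E p v" using child_props assms by blast
  then have Evp: "E v p" using Esym by blast
  have sum: "Suc (\<Sum>c\<in>ch v. szof (hist v t) c) = sz v" if "hv \<le> t"
    using assms(3) that size_rec[OF assms(1)] unfolding Q_def by simp
  show ?thesis
  proof (cases "t = hv")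
    case True
    then show ?thesis using assms sum unfolding snt_eq[of t v p] Q_def by (simp add: amsg_VT Evp)
  next
    case False
    have "\<not> (alldone (ch v) (hist v t) \<and> hloc (ch v) (hist v t) = t)"
      using assms(3) False unfolding Q_def by auto
    then show ?thesis using assms False unfolding snt_eq[of t v p] by (simp add: amsg_VT Evp)
  qed
qed

lemma Q_ex: "v \<in> VT \<Longrightarrow> \<exists>hv. Q v hv"
proof (induction "D - dep v" arbitrary: v rule: less_induct)
  case less
  have IH: "\<exists>hc. Q c hc" if "c \<in> ch v" for c
  proof -
    have c: "c \<in> VT" "par c = Some v" using that by (auto simp: children_ch)
    have "dep c = Suc (dep v)" using depth_child c by blast
    moreover have "dep c \<le> D" using depth_le_D c by blast
    ultimately show ?thesis using less c by simp
  qed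
  then obtain g where g: "\<forall>c\<in>ch v. Q c (g c)" by metis
  have sc: "snt i c v = (if i = g c then Some (to_bits L (sz c)) else None)" if "c \<in> ch v" for c i
    using sent_up g that by (auto simp: children_ch)
  define hv where "hv = (if ch v = {} then 0 else Suc (Max (g ` ch v)))"
  have fin: "finite (ch v)" by (rule fin_ch)
  have ad: "alldone (ch v) (hist v t) \<longleftrightarrow> hv \<le> t" for t
  proof -
    have "alldone (ch v) (hist v t) \<longleftrightarrow> (\<forall>c\<in>ch v. g c < t)"
      unfolding alldone_def arrived_hist using sc by auto
    also have "\<dots> \<longleftrightarrow> hv \<le> t" unfolding hv_def using fin by (auto simp: Suc_le_eq)
    finally show ?thesis .
  qed
  have D1: "hv + dep v \<le> D"
  proof (cases "ch v = {}")
    case True then show ?thesis using depth_le_D less.prems hv_def by simp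
  next
    case False
    have "Max (g ` ch v) \<in> g ` ch v" using False fin by simp
    then obtain c where c: "c \<in> ch v" "g c = Max (g ` ch v)" by (metis imageE)
    have "dep c = Suc (dep v)" using depth_child c by (auto simp: children_ch)
    then show ?thesis using g c False hv_def unfolding Q_def by auto
  qed
  have rest: "hloc (ch v) (hist v t) = hv \<and> (\<forall>c\<in>ch v. szof (hist v t) c = sz c)" if "hv \<le> t" for t
  proof -
    have lt: "g c < t" if "c \<in> ch v" for c
    proof -
      have "ch v \<noteq> {}" using that by blast
      then have "hv = Suc (Max (g ` ch v))" unfolding hv_def by simp
      moreover have "g c \<le> Max (g ` ch v)" using fin that by simp
      ultimately show ?thesis using \<open>hv \<le> t\<close> by simp
    qed
    have a: "arrt (hist v t) c = g c" if "c \<in> ch v" for c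
      using arrt_hist[OF sc[OF that] lt[OF that]] .
    have "szof (hist v t) c = sz c" if "c \<in> ch v" for c
      using szof_hist[OF sc[OF that] lt[OF that]] from_to_bits sz_lt by simp
    moreover have "hloc (ch v) (hist v t) = hv"
    proof (cases "ch v = {}")
      case True then show ?thesis unfolding hloc_def hv_def by simp
    next
      case False
      have "arrt (hist v t) ` ch v = g ` ch v" using a by (rule image_cong[OF refl])
      then show ?thesis unfolding hloc_def hv_def using False by simp
    qed
    ultimately show ?thesis by simp
  qed
  show ?case using D1 ad rest unfolding Q_def by blast
qed

lemma hc_prop: assumes "ch v \<noteq> {}" shows "hc v \<in> ch v \<and> (\<forall>c'\<in>ch v. sz c' \<le> sz (hc v))"
  unfolding hc_def using hcof_prop[OF fin_ch assms] .

lemma heavy_child: assumes "c \<in> ch v" shows "is_heavy par s hc c \<longleftrightarrow> hc v = c"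
proof -
  have "c \<in> VT" "par c = Some v" using assms by (auto simp: children_ch)
  then have "c \<noteq> s" using child_props by blast
  then show ?thesis unfolding is_heavy_def using \<open>par c = Some v\<close> by auto
qed

lemma heavy_s: "\<not> is_heavy par s hc s" unfolding is_heavy_def by simp

lemma cp_s: "cp s = [(s, 0)]"
  unfolding compressed_path_cpl root_path_s cpl_def using heavy_s by simp

lemma cp_child: assumes "c \<in> VT" "par c = Some v"
  shows "cp c = step (cp v) (is_heavy par s hc v) (is_heavy par s hc c) c"
proof -
  have v: "v \<in> VT" using child_props assms by blast
  have ne: "root_path par s v \<noteq> []" using root_path_len[of v] by auto
  have "\<not> is_heavy par s hc (root_path par s v ! 0)" using root_path_0[OF v] heavy_s by simp
  then show ?thesis unfolding compressed_path_cpl root_path_child[OF assms]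
    using cpl_snoc[OF ne] root_path_last[of v] by simp
qed

lemma sz_child_lt: assumes "c \<in> ch v" "v \<in> VT" shows "sz c < sz v"
proof -
  have "sz c \<le> (\<Sum>c\<in>ch v. sz c)" using assms fin_ch by (intro member_le_sum) auto
  then show ?thesis using size_rec[OF assms(2)] by simp
qed

lemma sz_light: assumes "c \<in> ch v" "v \<in> VT" "hc v \<noteq> c" shows "2 * sz c \<le> sz v"
proof -
  have h: "hc v \<in> ch v" "sz c \<le> sz (hc v)" using hc_prop[of v] assms by auto
  have "sz c + sz (hc v) = (\<Sum>x\<in>{c, hc v}. sz x)" using assms(3) by simp
  also have "\<dots> \<le> (\<Sum>x\<in>ch v. sz x)" using h assms fin_ch by (intro sum_mono2) auto
  finally show ?thesis using size_rec[OF assms(2)] h by simp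
qed

definition cpinv :: "nat \<Rightarrow> bool" where
  "cpinv v \<longleftrightarrow> cp v \<noteq> [] \<and> (\<forall>e\<in>set (cp v). fst e \<in> VT \<and> snd e \<le> dep v) \<and>
     2 ^ length (cp v) * sz v \<le> 2 * card VT \<and> dep v + sz v \<le> card VT"

lemma cp_inv: "v \<in> VT \<Longrightarrow> cpinv v"
proof (induction "dep v" arbitrary: v)
  case 0
  then have "v = s" using depth0 by simp
  then show ?case unfolding cpinv_def using cp_s sz_s s_in by simp
next
  case (Suc m)
  then have "v \<noteq> s" by auto
  then obtain p where p: "par v = Some p" "p \<in> VT" using par_ex Suc.prems by blast
  have dv: "dep v = Suc (dep p)" using depth_child p Suc.prems by blast
  then have IH: "cpinv p" using Suc p by simp
  have vc: "v \<in> ch p" using p Suc.prems by (simp add: children_ch)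
  have cpv: "cp v = step (cp p) (is_heavy par s hc p) (is_heavy par s hc v) v"
    using cp_child Suc.prems p by blast
  have ne: "cp p \<noteq> []" using IH cpinv_def by blast
  have a: "cp v \<noteq> []" using cpv step_ne ne by simp
  have b: "\<forall>e\<in>set (cp v). fst e \<in> VT \<and> snd e \<le> dep v"
  proof
    fix e assume "e \<in> set (cp v)"
    then have "e = (v, 0) \<or> (\<exists>e'\<in>set (cp p). fst e = fst e' \<and> snd e \<le> Suc (snd e'))"
      using step_entries[OF ne] cpv by simp
    then show "fst e \<in> VT \<and> snd e \<le> dep v" using IH Suc.prems dv unfolding cpinv_def by force
  qed
  have lt: "sz v < sz p" using sz_child_lt vc p by blast
  have c: "dep v + sz v \<le> card VT" using IH lt dv unfolding cpinv_def by simp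
  have d: "2 ^ length (cp v) * sz v \<le> 2 * card VT"
  proof (cases "hc p = v")
    case True
    then have "length (cp v) = length (cp p)" using cpv step_len[OF ne] heavy_child[OF vc] by simp
    then have "2 ^ length (cp v) * sz v \<le> 2 ^ length (cp p) * sz p" using lt by simp
    then show ?thesis using IH unfolding cpinv_def by linarith
  next
    case False
    then have "length (cp v) = Suc (length (cp p))" using cpv step_len[OF ne] heavy_child[OF vc] by simp
    then have "2 ^ length (cp v) * sz v = 2 ^ length (cp p) * (2 * sz v)" by simp
    also have "\<dots> \<le> 2 ^ length (cp p) * sz p" using sz_light[OF vc p(2) False] by simp
    finally show ?thesis using IH unfolding cpinv_def by linarith
  qed
  show ?case unfolding cpinv_def using a b c d by blast
qed

lemma cp_len: assumes "v \<in> VT" shows "length (cp v) \<le> L" "1 \<le> length (cp v)"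
proof -
  have i: "cpinv v" using cp_inv assms by blast
  have "(2::nat) ^ length (cp v) \<le> 2 ^ length (cp v) * sz v" using sz_pos[OF assms] by simp
  also have "\<dots> \<le> 2 * card VT" using i unfolding cpinv_def by blast
  also have "\<dots> < 2 * 2 ^ L" using cardVT_le nL by simp
  finally have "(2::nat) ^ length (cp v) < 2 ^ Suc L" by simp
  then have "length (cp v) < Suc L" by (rule power_less_imp_less_exp[rotated]) simp
  then show "length (cp v) \<le> L" by simp
  show "1 \<le> length (cp v)" using i unfolding cpinv_def by (simp add: Suc_leI)
qed

lemma cp_ent: assumes "v \<in> VT" "e \<in> set (cp v)" shows "fst e < 2 ^ W" "snd e < 2 ^ L"
proof -
  have i: "cpinv v" using cp_inv assms by blast
  then show "fst e < 2 ^ W" using idW assms unfolding cpinv_def by blast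
  have "snd e \<le> dep v" "dep v + sz v \<le> card VT" using i assms unfolding cpinv_def by auto
  then show "snd e < 2 ^ L" using sz_pos[OF assms(1)] cardVT_le nL by linarith
qed

definition Hf :: "nat \<Rightarrow> nat" where "Hf v = (SOME hv. Q v hv)"

lemma Hf: "v \<in> VT \<Longrightarrow> Q v (Hf v)"
  unfolding Hf_def using Q_ex by (rule someI_ex)

lemma sent_up': assumes "v \<in> VT" "par v = Some p"
  shows "snt t v p = (if t = Hf v then Some (to_bits L (sz v)) else None)"
  using sent_up[OF assms Hf[OF assms(1)]] .

lemma Hf_child: assumes "v \<in> VT" "c \<in> ch v" shows "Hf c < Hf v"
proof -
  have c: "c \<in> VT" "par c = Some v" using assms by (auto simp: children_ch)
  have "alldone (ch v) (hist v (Hf v))" using Hf[OF assms(1)] unfolding Q_def by simp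
  then obtain i where "i < Hf v" "snt i c v \<noteq> None"
    using assms(2) unfolding alldone_def arrived_hist by blast
  then show ?thesis using sent_up'[OF c, of i] by (simp split: if_splits)
qed

definition P2 :: "nat \<Rightarrow> nat \<Rightarrow> bool" where
  "P2 v Sv \<longleftrightarrow> Hf v \<le> Sv \<and> Sv \<le> Hf s + dep v * L \<and>
     (\<forall>t. compl_f (par v) (ch v) (hist v t) \<longleftrightarrow> Sv \<le> t) \<and>
     (\<forall>t\<ge>Sv. start_f (par v) (ch v) (hist v t) = Sv \<and> mypath_f W v (par v) (hist v t) = cp v \<and>
        myheavy_f (par v) (hist v t) = is_heavy par s hc v)"

lemma sent_down: assumes "v \<in> VT" "c \<in> ch v" "P2 v Sv"
  shows "snt t v c = (if Sv \<le> t \<and> t - Sv < length (cp c)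
     then Some (enc_entry W L (Suc (t - Sv) = length (cp c)) (is_heavy par s hc c) (cp c ! (t - Sv))) else None)"
proof -
  have c: "c \<in> VT" "par c = Some v" using assms by (auto simp: children_ch)
  have Evc: "E v c" using child_props c by blast
  have np: "par v \<noteq> Some c" using not_par_child assms(2) by blast
  have e0: "snt t v c = amsg_f b (I v, hist v t) c" using Evc snt_eq[of t v c] by simp
  show ?thesis
  proof (cases "Sv \<le> t")
    case False
    then have "\<not> compl_f (par v) (ch v) (hist v t)" using assms(3) unfolding P2_def by blast
    then show ?thesis using False e0 amsg_VT[OF assms(1)] np assms(2) by (simp add: Let_def)
  next
    case True
    have Qv: "Q v (Hf v)" using Hf assms(1) by blast
    have ht: "Hf v \<le> t" using True assms(3) unfolding P2_def by simp
    have cm: "compl_f (par v) (ch v) (hist v t)" using True assms(3) unfolding P2_def by blast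
    have ad: "alldone (ch v) (hist v t)" using Qv ht unfolding Q_def by blast
    have st: "start_f (par v) (ch v) (hist v t) = Sv"
      and mp: "mypath_f W v (par v) (hist v t) = cp v"
      and mh: "myheavy_f (par v) (hist v t) = is_heavy par s hc v"
      using True assms(3) unfolding P2_def by blast+
    have "hcof (ch v) (szof (hist v t)) = hcof (ch v) sz"
      using Qv ht unfolding Q_def by (intro hcof_cong) blast
    then have hcl: "hcof (ch v) (szof (hist v t)) = hc v" unfolding hc_def by simp
    have hv: "(c = hc v) = is_heavy par s hc c" using heavy_child[OF assms(2)] by auto
    have pc: "step (cp v) (is_heavy par s hc v) (c = hc v) c = cp c"
      using cp_child[OF c] hv by simp
    show ?thesis using True e0 amsg_VT[OF assms(1)] np assms(2) cm ad st mp mh hcl hv pc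
      by (simp add: Let_def)
  qed
qed

lemma map_upt_shift: "map g [x..<y] = map (\<lambda>j. g (x + j)) [0..<y - x]"
proof (induction y)
  case 0 then show ?case by simp
next
  case (Suc y)
  then show ?case by (cases "x \<le> y") (auto simp: Suc_diff_le)
qed

lemma P2_ex: "v \<in> VT \<Longrightarrow> \<exists>Sv. P2 v Sv"
proof (induction "dep v" arbitrary: v)
  case 0
  then have vs: "v = s" using depth0 by simp
  have Qs: "Q s (Hf s)" using Hf s_in by blast
  have "P2 s (Hf s)" unfolding P2_def using Qs par_s cp_s heavy_s
    by (simp add: compl_f_def start_f_def mypath_f_def myheavy_f_def Q_def)
  then show ?case using vs by blast
next
  case (Suc m)
  then have "v \<noteq> s" by auto
  then obtain p where p: "par v = Some p" "p \<in> VT" using par_ex Suc.prems by blast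
  have dv: "dep v = Suc (dep p)" using depth_child p Suc.prems by blast
  then obtain Sp where Sp: "P2 p Sp" using Suc p by auto
  have vc: "v \<in> ch p" using p Suc.prems by (simp add: children_ch)
  define len where "len = length (cp v)"
  have len1: "1 \<le> len" "len \<le> L" using cp_len Suc.prems len_def by auto
  define f where "f j = enc_entry W L (Suc j = len) (is_heavy par s hc v) (cp v ! j)" for j
  have sd: "snt i p v = (if Sp \<le> i \<and> i < Sp + len then Some (f (i - Sp)) else None)" for i
    using sent_down[OF p(2) vc Sp, of i] unfolding f_def len_def by auto
  have pm: "pmsgs (hist v t) p = map f [0..<min t (Sp + len) - Sp]" for t
  proof -
    have "filter (\<lambda>i. snt i p v \<noteq> None) [0..<t] = filter (\<lambda>i. Sp \<le> i \<and> i < Sp + len) [0..<t]"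
      using sd by (intro filter_cong) auto
    also have "\<dots> = [Sp..<min t (Sp + len)]" by (rule filter_interval)
    finally have "pmsgs (hist v t) p = map (\<lambda>i. the (snt i p v)) [Sp..<min t (Sp + len)]"
      unfolding pmsgs_hist by simp
    also have "\<dots> = map (\<lambda>i. f (i - Sp)) [Sp..<min t (Sp + len)]"
      using sd by (intro map_cong) auto
    also have "\<dots> = map f [0..<min t (Sp + len) - Sp]"
      using map_upt_shift[of "\<lambda>i. f (i - Sp)" Sp "min t (Sp + len)"] by simp
    finally show ?thesis .
  qed
  have hdf: "hd (f j) = (Suc j = len)" "hd (tl (f j)) = is_heavy par s hc v" for j
    unfolding f_def enc_entry_def by simp_all
  define Sv where "Sv = Sp + len"
  have cm: "compl_f (par v) (ch v) (hist v t) \<longleftrightarrow> Sv \<le> t" for t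
  proof -
    have "compl_f (par v) (ch v) (hist v t) \<longleftrightarrow> (\<exists>m\<in>set (map f [0..<min t (Sp + len) - Sp]). hd m)"
      by (simp add: compl_f_def p pm)
    also have "\<dots> \<longleftrightarrow> (\<exists>j < min t (Sp + len) - Sp. Suc j = len)"
      using hdf by auto
    also have "\<dots> \<longleftrightarrow> Sv \<le> t" unfolding Sv_def using len1
      by (auto intro: exI[of _ "len - 1"])
    finally show ?thesis .
  qed
  have rest: "start_f (par v) (ch v) (hist v t) = Sv \<and> mypath_f W v (par v) (hist v t) = cp v \<and>
        myheavy_f (par v) (hist v t) = is_heavy par s hc v" if "Sv \<le> t" for t
  proof -
    have k: "min t (Sp + len) - Sp = len" using that Sv_def by simp
    have "(LEAST i. i < length (hist v t) \<and> (hist v t ! i) p \<noteq> None \<and> hd (the ((hist v t ! i) p)))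
        = Sp + len - 1"
    proof (rule Least_equality)
      show "Sp + len - 1 < length (hist v t) \<and> (hist v t ! (Sp + len - 1)) p \<noteq> None \<and>
            hd (the ((hist v t ! (Sp + len - 1)) p))"
        using that Sv_def len1 sd[of "Sp + len - 1"] hdf by auto
    next
      fix y assume "y < length (hist v t) \<and> (hist v t ! y) p \<noteq> None \<and> hd (the ((hist v t ! y) p))"
      then have "snt y p v \<noteq> None" "hd (the (snt y p v))" by auto
      then show "Sp + len - 1 \<le> y" using sd[of y] hdf by (auto split: if_splits)
    qed
    then have st: "start_f (par v) (ch v) (hist v t) = Sv"
      unfolding start_f_def p Sv_def using len1 by simp
    have e1: "map (dec_entry W) (map f [0..<len]) = map (\<lambda>j. cp v ! j) [0..<len]"
      unfolding map_map
    proof (rule map_cong[OF refl])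
      fix j assume "j \<in> set [0..<len]"
      then have "cp v ! j \<in> set (cp v)" using len_def by simp
      then show "(dec_entry W \<circ> f) j = cp v ! j"
        unfolding f_def using dec_enc cp_ent[OF Suc.prems] by simp
    qed
    have e2: "map (\<lambda>j. cp v ! j) [0..<len] = cp v" unfolding len_def by (rule map_nth)
    have "mypath_f W v (par v) (hist v t) = map (dec_entry W) (map f [0..<len])"
      by (simp add: mypath_f_def p pm k)
    then have mp: "mypath_f W v (par v) (hist v t) = cp v"
      using e1 e2 by simp
    have "myheavy_f (par v) (hist v t) = hd (tl (hd (map f [0..<len])))"
      by (simp add: myheavy_f_def p pm k)
    then have mh: "myheavy_f (par v) (hist v t) = is_heavy par s hc v"
      using len1 hdf by (simp add: hd_map)
    show ?thesis using st mp mh by blast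
  qed
  have h1: "Hf v \<le> Sv" using Hf_child[OF p(2) vc] Sp len1 unfolding P2_def Sv_def by simp
  have h2: "Sv \<le> Hf s + dep v * L" using Sp len1 dv unfolding P2_def Sv_def by simp
  have "P2 v Sv" unfolding P2_def using h1 h2 cm rest by blast
  then show ?case by blast
qed

end

context tset2 begin

definition Sf :: "nat \<Rightarrow> nat" where "Sf v = (SOME Sv. P2 v Sv)"

lemma Sf: "v \<in> VT \<Longrightarrow> P2 v (Sf v)"
  unfolding Sf_def using P2_ex by (rule someI_ex)

definition R :: nat where "R = (D + 1) * (L + 1)"

lemma msg_class: assumes "snt t u v \<noteq> None" shows "u \<in> VT \<and> (par u = Some v \<or> v \<in> ch u)"
proof -
  have E: "E u v" and am: "amsg_f b (I u, hist u t) v \<noteq> None"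
    using assms snt_eq[of t u v] by (auto split: if_splits)
  have "u \<in> VT"
  proof (rule ccontr)
    assume "u \<notin> VT" then show False using am amsg_notVT[of u] by simp
  qed
  moreover have "par u = Some v \<or> v \<in> ch u"
    using am amsg_VT[OF \<open>u \<in> VT\<close>, of "hist u t" v] by (auto split: if_splits)
  ultimately show ?thesis by blast
qed

lemma Hf_le: "u \<in> VT \<Longrightarrow> Hf u + dep u \<le> D" using Hf unfolding Q_def by blast

lemma Sf_bound: assumes "u \<in> VT" "v \<in> ch u" shows "Sf u + length (cp v) < R"
proof -
  have v: "v \<in> VT" using assms by (simp add: children_ch)
  have a: "Sf u \<le> Hf s + dep u * L" using Sf[OF assms(1)] unfolding P2_def by blast
  have b: "Hf s \<le> D" using Hf_le[OF s_in] by simp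
  have c: "dep u \<le> D" using depth_le_D assms(1) by blast
  have d: "length (cp v) \<le> L" using cp_len v by blast
  have "dep u * L \<le> D * L" using c by simp
  then have "Sf u + length (cp v) \<le> D + D * L + L" using a b d by linarith
  also have "\<dots> < R" unfolding R_def by (simp add: algebra_simps)
  finally show ?thesis .
qed

lemma sent_none: assumes "R \<le> t" shows "snt t u v = None"
proof (rule ccontr)
  assume a: "snt t u v \<noteq> None"
  then have u: "u \<in> VT" and cls: "par u = Some v \<or> v \<in> ch u" using msg_class by blast+
  show False
  proof (cases "par u = Some v")
    case True
    then have "t = Hf u" using a sent_up'[OF u True, of t] by (simp split: if_splits)
    moreover have "Hf u \<le> D" using Hf_le u by fastforce
    moreover have "D < R" unfolding R_def by simp
    ultimately show False using assms by simp
  next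
    case False
    then have vc: "v \<in> ch u" using cls by blast
    have "t < Sf u + length (cp v)" using a sent_down[OF u vc Sf[OF u], of t] by (simp split: if_splits)
    then show False using Sf_bound[OF u vc] assms by simp
  qed
qed

lemma msg_len: assumes "snt t u v = Some m" shows "length m \<le> (b + 3) * L"
proof -
  have a: "snt t u v \<noteq> None" using assms by simp
  then have u: "u \<in> VT" and cls: "par u = Some v \<or> v \<in> ch u" using msg_class by blast+
  have L1: "1 \<le> L" by (rule lg_ge1)
  show ?thesis
  proof (cases "par u = Some v")
    case True
    then have "m = to_bits L (sz u)" using assms sent_up'[OF u True, of t] by (simp split: if_splits)
    then show ?thesis by simp
  next
    case False
    then have vc: "v \<in> ch u" using cls by blast
    then have "m = enc_entry W L (Suc (t - Sf u) = length (cp v)) (is_heavy par s hc v) (cp v ! (t - Sf u))"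
      using assms sent_down[OF u vc Sf[OF u], of t] by (simp split: if_splits)
    then have "length m = 2 + W + L" by (simp add: len_enc)
    then show ?thesis using L1 by (simp add: algebra_simps)
  qed
qed

lemma load_dir: "card {t. t < R \<and> snt t u v \<noteq> None} \<le> L"
proof (cases "u \<in> VT \<and> par u = Some v")
  case True
  then have "{t. t < R \<and> snt t u v \<noteq> None} \<subseteq> {Hf u}"
    using sent_up'[of u v] by (auto split: if_splits)
  then have "card {t. t < R \<and> snt t u v \<noteq> None} \<le> card {Hf u}" by (intro card_mono) auto
  then show ?thesis using lg_ge1[of n] by simp
next
  case False
  show ?thesis
  proof (cases "u \<in> VT \<and> v \<in> ch u")
    case True
    then have "{t. t < R \<and> snt t u v \<noteq> None} \<subseteq> {Sf u..<Sf u + length (cp v)}"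
      using sent_down[OF _ _ Sf, of u v] by (auto split: if_splits)
    then have "card {t. t < R \<and> snt t u v \<noteq> None} \<le> card {Sf u..<Sf u + length (cp v)}"
      by (intro card_mono) auto
    moreover have "length (cp v) \<le> L" using cp_len True by (auto simp: children_ch)
    ultimately show ?thesis by simp
  next
    case False2: False
    have "\<forall>t. snt t u v = None" using msg_class False False2 by blast
    then show ?thesis by simp
  qed
qed

lemma outp_ok: assumes "R \<le> t" "v \<in> VT"
  shows "aout A (run A I E t v) = (is_heavy par s hc v, cp v)"
proof -
  have P: "P2 v (Sf v)" using Sf assms(2) by blast
  have "Sf v \<le> Hf s + dep v * L" using P unfolding P2_def by blast
  moreover have "Hf s \<le> D" using Hf_le[OF s_in] by simp
  moreover have "dep v * L \<le> D * L" using depth_le_D assms(2) by simp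
  moreover have "D + D * L < R" unfolding R_def by (simp add: algebra_simps)
  ultimately have "Sf v \<le> t" using assms(1) by linarith
  then have "mypath_f W v (par v) (hist v t) = cp v" "myheavy_f (par v) (hist v t) = is_heavy par s hc v"
    using P unfolding P2_def by blast+
  then show ?thesis unfolding run_eq using assms(2) by (simp add: aout_f_def local_input_def)
qed

lemma hc_choice: "heavy_choice VT par s hc"
  unfolding heavy_choice_def using hc_prop by blast

lemma R_bound: "R \<le> (b + 3) * (D + 1) * L ^ 1"
proof -
  have "L + 1 \<le> (b + 3) * L" using lg_ge1[of n] by (simp add: algebra_simps)
  then have "(D + 1) * (L + 1) \<le> (D + 1) * ((b + 3) * L)" by (rule mult_le_mono2)
  then show ?thesis unfolding R_def by (simp add: algebra_simps)
qed

end

theorem lemma1p3: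
  shows "\<forall>b::nat. \<exists>A::alg. \<exists>c k::nat.
    \<forall>(n::nat) (V::nat set) (E::nat \<Rightarrow> nat \<Rightarrow> bool) (VT::nat set) (s::nat) (par::nat \<Rightarrow> nat option).
      finite V \<and> card V = n \<and> (\<forall>v\<in>V. v < n ^ b) \<and>
      (\<forall>u v. E u v \<longrightarrow> u \<in> V \<and> v \<in> V \<and> u \<noteq> v \<and> E v u) \<and>
      rooted_tree_in V E VT s par
      \<longrightarrow>
      (let I = local_input n E VT par in
       \<exists>r \<le> c * (tdiam VT par s + 1) * lg n ^ k.
         (\<forall>t u v m. sent A I E t u v = Some m \<longrightarrow> length m \<le> c * lg n) \<and>
         (\<forall>t\<ge>r. \<forall>u v. sent A I E t u v = None) \<and>
         (\<forall>u v. E u v \<longrightarrow> edge_load A I E r u v \<le> c * lg n ^ k) \<and>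
         (\<exists>hc. heavy_choice VT par s hc \<and>
            (\<forall>t\<ge>r. \<forall>v\<in>VT. aout A (run A I E t v) =
                 (is_heavy par s hc v, compressed_path par s hc v))))"
proof (intro allI)
  fix b :: nat
  show "\<exists>A::alg. \<exists>c k::nat.
    \<forall>(n::nat) (V::nat set) (E::nat \<Rightarrow> nat \<Rightarrow> bool) (VT::nat set) (s::nat) (par::nat \<Rightarrow> nat option).
      finite V \<and> card V = n \<and> (\<forall>v\<in>V. v < n ^ b) \<and>
      (\<forall>u v. E u v \<longrightarrow> u \<in> V \<and> v \<in> V \<and> u \<noteq> v \<and> E v u) \<and>
      rooted_tree_in V E VT s par
      \<longrightarrow>
      (let I = local_input n E VT par in
       \<exists>r \<le> c * (tdiam VT par s + 1) * lg n ^ k.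
         (\<forall>t u v m. sent A I E t u v = Some m \<longrightarrow> length m \<le> c * lg n) \<and>
         (\<forall>t\<ge>r. \<forall>u v. sent A I E t u v = None) \<and>
         (\<forall>u v. E u v \<longrightarrow> edge_load A I E r u v \<le> c * lg n ^ k) \<and>
         (\<exists>hc. heavy_choice VT par s hc \<and>
            (\<forall>t\<ge>r. \<forall>v\<in>VT. aout A (run A I E t v) =
                 (is_heavy par s hc v, compressed_path par s hc v))))"
  proof (rule exI[of _ "alg_of b"], rule exI[of _ "b + 3"], rule exI[of _ "1::nat"], intro allI impI)
    fix n V E VT s par
    assume H: "finite V \<and> card V = n \<and> (\<forall>v\<in>V. v < n ^ b) \<and>
      (\<forall>u v. E u v \<longrightarrow> u \<in> V \<and> v \<in> V \<and> u \<noteq> v \<and> E v u) \<and>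
      rooted_tree_in V E VT s par"
    interpret T: tset2 V E VT s par b n
      using H by unfold_locales auto
    have c1: "T.R \<le> (b + 3) * (tdiam VT par s + 1) * lg n ^ 1" by (rule T.R_bound)
    have c2: "\<forall>t u v m. sent (alg_of b) (local_input n E VT par) E t u v = Some m \<longrightarrow> length m \<le> (b + 3) * lg n"
      using T.msg_len by blast
    have c3: "\<forall>t\<ge>T.R. \<forall>u v. sent (alg_of b) (local_input n E VT par) E t u v = None"
      using T.sent_none by blast
    have c4: "\<forall>u v. E u v \<longrightarrow> edge_load (alg_of b) (local_input n E VT par) E T.R u v \<le> (b + 3) * lg n ^ 1"
    proof (intro allI impI)
      fix u v
      have "edge_load (alg_of b) (local_input n E VT par) E T.R u v \<le> lg n + lg n"
        unfolding edge_load_def using T.load_dir[of u v] T.load_dir[of v u] by linarith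
      also have "\<dots> \<le> (b + 3) * lg n ^ 1" by (simp add: algebra_simps)
      finally show "edge_load (alg_of b) (local_input n E VT par) E T.R u v \<le> (b + 3) * lg n ^ 1" .
    qed
    have c5: "\<exists>hc. heavy_choice VT par s hc \<and>
            (\<forall>t\<ge>T.R. \<forall>v\<in>VT. aout (alg_of b) (run (alg_of b) (local_input n E VT par) E t v) =
                 (is_heavy par s hc v, compressed_path par s hc v))"
      using T.hc_choice T.outp_ok by blast
    show "let I = local_input n E VT par in
       \<exists>r \<le> (b + 3) * (tdiam VT par s + 1) * lg n ^ 1.
         (\<forall>t u v m. sent (alg_of b) I E t u v = Some m \<longrightarrow> length m \<le> (b + 3) * lg n) \<and>
         (\<forall>t\<ge>r. \<forall>u v. sent (alg_of b) I E t u v = None) \<and>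
         (\<forall>u v. E u v \<longrightarrow> edge_load (alg_of b) I E r u v \<le> (b + 3) * lg n ^ 1) \<and>
         (\<exists>hc. heavy_choice VT par s hc \<and>
            (\<forall>t\<ge>r. \<forall>v\<in>VT. aout (alg_of b) (run (alg_of b) I E t v) =
                 (is_heavy par s hc v, compressed_path par s hc v)))"
      unfolding Let_def using c1 c2 c3 c4 c5 by blast
  qed
qed


end
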